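(* Suppose that $\alpha_1$ and $\alpha_2$ are the roots of an irreducible quadratic polynomial in $\mathbb{Q}[x]$ such that $0 < \alpha_1 < 1 < \alpha_2$. Then the additive monoid $M_{\alpha_1} = \{f(\alpha_1) \mid f(x) \in \mathbb{N}_0[x,x^{-1}]\}$ is an FFM and, therefore, satisfies the ACCP.
   Context: $\mathbb{N}_0[x,x^{-1}]$ denotes the semiring of Laurent polynomials with coefficients in $\mathbb{N}_0$. A reduced additive monoid $M$ is an FFM (finite factorization monoid) if it is atomic and every nonzero element has only finitely many factorizations (formal sums of atoms, up to order, adding to it), where atoms are nonzero elements not expressible as a sum of two nonzero elements. $M$ satisfies the ACCP if every ascending chain of principal ideals $x_1 + M \subseteq x_2 + M \subseteq \cdots$ eventually stabilizes. *)

theory Defs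
  imports Complex_Main "HOL-Computational_Algebra.Polynomial" "HOL-Library.Multiset"
begin

definition laurent_monoid :: "real \<Rightarrow> real set" where
  "laurent_monoid \<alpha> =
     {(\<Sum>k\<in>K. of_nat (c k) * \<alpha> powi k) | K c. finite (K :: int set)}"

definition atoms :: "real set \<Rightarrow> real set" where
  "atoms M = {a \<in> M. a \<noteq> 0 \<and>
     \<not> (\<exists>b c. b \<in> M \<and> c \<in> M \<and> b \<noteq> 0 \<and> c \<noteq> 0 \<and> a = b + c)}"

definition factorizations :: "real set \<Rightarrow> real \<Rightarrow> real multiset set" where
  "factorizations M x = {F. set_mset F \<subseteq> atoms M \<and> sum_mset F = x}"

definition atomic_monoid :: "real set \<Rightarrow> bool" where
  "atomic_monoid M \<longleftrightarrow> (\<forall>x\<in>M. x \<noteq> 0 \<longrightarrow> factorizations M x \<noteq> {})"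

definition FFM :: "real set \<Rightarrow> bool" where
  "FFM M \<longleftrightarrow> atomic_monoid M \<and> (\<forall>x\<in>M. x \<noteq> 0 \<longrightarrow> finite (factorizations M x))"

definition principal_ideal :: "real set \<Rightarrow> real \<Rightarrow> real set" where
  "principal_ideal M x = (\<lambda>m. x + m) ` M"

definition ACCP :: "real set \<Rightarrow> bool" where
  "ACCP M \<longleftrightarrow> (\<forall>s :: nat \<Rightarrow> real.
     (\<forall>n. s n \<in> M) \<and> (\<forall>n. principal_ideal M (s n) \<subseteq> principal_ideal M (s (Suc n)))
     \<longrightarrow> (\<exists>N. \<forall>n\<ge>N. principal_ideal M (s n) = principal_ideal M (s N)))"

end

theory Submission
  imports Defs "HOL-Computational_Algebra.Polynomial_Factorial" "HOL-Computational_Algebra.Field_as_Ring" "HOL-Library.FuncSet"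
begin


lemma abstract_FFM_ACCP:
  fixes M :: "real set" and \<sigma> :: "real \<Rightarrow> real"
  assumes addM: "\<And>x y. x\<in>M \<Longrightarrow> y\<in>M \<Longrightarrow> x+y\<in>M \<and> \<sigma>(x+y) = \<sigma> x + \<sigma> y"
    and nn: "\<And>x. x\<in>M \<Longrightarrow> 0 \<le> x \<and> 0 \<le> \<sigma> x"
    and ge1: "\<And>x. x\<in>M \<Longrightarrow> x\<noteq>0 \<Longrightarrow> 1 \<le> x + \<sigma> x"
    and z: "0\<in>M"
    and fin: "\<And>X Y. finite {a\<in>M. a \<le> X \<and> \<sigma> a \<le> Y}"
  shows "FFM M \<and> ACCP M"
proof -
  have atM: "atoms M \<subseteq> M" unfolding atoms_def by auto
  have at0: "a \<in> atoms M \<Longrightarrow> a \<noteq> 0" for a unfolding atoms_def by auto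
  have ex: "\<exists>F. set_mset F \<subseteq> atoms M \<and> sum_mset F = x" if "x\<in>M" "x\<noteq>0" for x
    using that
  proof (induction "nat \<lfloor>x + \<sigma> x\<rfloor>" arbitrary: x rule: less_induct)
    case less
    show ?case
    proof (cases "x \<in> atoms M")
      case True
      then show ?thesis by (intro exI[of _ "{#x#}"]) auto
    next
      case False
      then obtain b c where bc: "b\<in>M" "c\<in>M" "b\<noteq>0" "c\<noteq>0" "x = b + c"
        using less.prems unfolding atoms_def by blast
      have sx: "\<sigma> x = \<sigma> b + \<sigma> c" using addM bc by simp
      have "1 \<le> b + \<sigma> b" "1 \<le> c + \<sigma> c" using ge1 bc by auto
      then have lb: "nat \<lfloor>b + \<sigma> b\<rfloor> < nat \<lfloor>x + \<sigma> x\<rfloor>" "nat \<lfloor>c + \<sigma> c\<rfloor> < nat \<lfloor>x + \<sigma> x\<rfloor>"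
        using sx bc(5) by linarith+
      obtain Fb where "set_mset Fb \<subseteq> atoms M" "sum_mset Fb = b" using less.hyps[OF lb(1)] bc by blast
      moreover obtain Fc where "set_mset Fc \<subseteq> atoms M" "sum_mset Fc = c" using less.hyps[OF lb(2)] bc by blast
      ultimately show ?thesis using bc by (intro exI[of _ "Fb + Fc"]) auto
    qed
  qed
  have sumM: "sum_mset F \<in> M \<and> \<sigma> (sum_mset F) = (\<Sum>a\<in>#F. \<sigma> a)" if "set_mset F \<subseteq> M" for F
    using that
  proof (induction F)
    case empty
    then show ?case using z addM[OF z z] by simp
  next
    case (add a F)
    then show ?case using addM by auto
  qed
  have sizeF: "real (size F) \<le> sum_mset F + \<sigma> (sum_mset F)" if "set_mset F \<subseteq> M - {0}" for F
    using that
  proof (induction F)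
    case empty
    then show ?case using nn[OF z] by simp
  next
    case (add a F)
    then have "a \<in> M" "a \<noteq> 0" "set_mset F \<subseteq> M" by auto
    then have "sum_mset F \<in> M" "\<sigma> (sum_mset F + a) = \<sigma> (sum_mset F) + \<sigma> a" using sumM addM by auto
    then show ?case using add ge1[of a] \<open>a\<in>M\<close> \<open>a\<noteq>0\<close> by (simp add: add.commute) 
  qed
  have finF: "finite (factorizations M x)" if "x \<in> M" for x
  proof -
    define A where "A = {a\<in>M. a \<le> x \<and> \<sigma> a \<le> \<sigma> x}"
    define n where "n = nat \<lfloor>x + \<sigma> x\<rfloor>"
    have "factorizations M x \<subseteq> mset ` {xs. set xs \<subseteq> A \<and> length xs \<le> n}"
    proof
      fix F assume "F \<in> factorizations M x"
      then have F: "set_mset F \<subseteq> atoms M" "sum_mset F = x" unfolding factorizations_def by auto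
      have FM: "set_mset F \<subseteq> M" using F atM by auto
      have "set_mset F \<subseteq> A"
      proof
        fix a assume a: "a \<in># F"
        define G where "G = F - {#a#}"
        have FG: "F = add_mset a G" using a G_def by simp
        have "set_mset G \<subseteq> M" using FM FG by auto
        then have "sum_mset G \<in> M" using sumM by blast
        moreover have "a \<in> M" using a FM by auto
        moreover have "x = a + sum_mset G" using F FG by simp
        ultimately show "a \<in> A" unfolding A_def using addM nn by force
      qed
      moreover have "size F \<le> n"
      proof -
        have "set_mset F \<subseteq> M - {0}" using F atM at0 by auto
        from sizeF[OF this] F have "real (size F) \<le> x + \<sigma> x" by simp
        then show ?thesis unfolding n_def by linarith
      qed
      moreover obtain xs where "mset xs = F" using ex_mset by blast
      ultimately show "F \<in> mset ` {xs. set xs \<subseteq> A \<and> length xs \<le> n}" by auto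
    qed
    moreover have "finite A" unfolding A_def by (rule fin)
    ultimately show ?thesis using finite_lists_length_le finite_surj by blast
  qed
  have "FFM M"
    unfolding FFM_def atomic_monoid_def factorizations_def using ex finF[unfolded factorizations_def] by blast
  moreover have "ACCP M"
    unfolding ACCP_def
  proof (intro allI impI)
    fix s :: "nat \<Rightarrow> real"
    assume as: "(\<forall>n. s n \<in> M) \<and> (\<forall>n. principal_ideal M (s n) \<subseteq> principal_ideal M (s (Suc n)))"
    define f where "f n = nat \<lfloor>s n + \<sigma> (s n)\<rfloor>" for n
    have step: "\<exists>m\<in>M. s n = s (Suc n) + m" for n
    proof -
      have "s n \<in> principal_ideal M (s n)" unfolding principal_ideal_def using z by force
      then have "s n \<in> principal_ideal M (s (Suc n))" using as by blast
      then show ?thesis unfolding principal_ideal_def by auto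
    qed
    have fdec: "f (Suc n) \<le> f n \<and> (s (Suc n) \<noteq> s n \<longrightarrow> f (Suc n) < f n)" for n
    proof -
      obtain m where m: "m\<in>M" "s n = s (Suc n) + m" using step by blast
      have "\<sigma> (s n) = \<sigma> (s (Suc n)) + \<sigma> m" using addM m as by auto
      moreover have "0 \<le> m + \<sigma> m" using nn m by force
      moreover have "m \<noteq> 0 \<Longrightarrow> 1 \<le> m + \<sigma> m" using ge1 m by auto
      moreover have "0 \<le> s (Suc n) + \<sigma> (s (Suc n))" using nn as by force
      ultimately show ?thesis unfolding f_def using m by (auto; linarith)
    qed
    obtain N where N: "\<forall>n. f N \<le> f n" using ex_has_least_nat[of "\<lambda>_. True" 0 f] by auto
    have mono: "f n \<le> f N" if "N \<le> n" for n
      using that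
    proof (induction n rule: dec_induct)
      case base then show ?case by simp
    next
      case (step n) then show ?case using fdec[of n] by simp
    qed
    have "s n = s N" if "N \<le> n" for n
      using that
    proof (induction n rule: dec_induct)
      case base then show ?case by simp
    next
      case (step n)
      have "f (Suc n) \<le> f N" using mono step by simp
      then have "s (Suc n) = s n" using fdec[of n] N mono[OF step(1)] by (metis leD order.trans)
      then show ?case using step by simp
    qed
    then show "\<exists>N. \<forall>n\<ge>N. principal_ideal M (s n) = principal_ideal M (s N)" by metis
  qed
  ultimately show ?thesis by simp
qed



lemma mp_add: "map_poly (of_rat::rat\<Rightarrow>real) (x+y) = map_poly of_rat x + map_poly of_rat y"
  by (rule poly_eqI) (simp add: coeff_map_poly of_rat_add)

lemma mp_mult: "map_poly (of_rat::rat\<Rightarrow>real) (x*y) = map_poly of_rat x * map_poly of_rat y"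
  by (rule poly_eqI) (simp add: coeff_mult coeff_map_poly of_rat_sum of_rat_mult)

lemma mp_sum: "finite L \<Longrightarrow> map_poly (of_rat::rat\<Rightarrow>real) (\<Sum>k\<in>L. f k) = (\<Sum>k\<in>L. map_poly of_rat (f k))"
  by (induction L rule: finite_induct) (auto simp: mp_add)

lemma conj_zero:
  fixes p :: "rat poly" and e :: "int \<Rightarrow> rat" and a b :: real
  assumes irr: "irreducible p" and r1: "poly (map_poly of_rat p) a = 0"
    and r2: "poly (map_poly of_rat p) b = 0" and a0: "a \<noteq> 0" and b0: "b \<noteq> 0" and L: "finite L"
    and s: "(\<Sum>k\<in>L. of_rat (e k) * a powi k) = 0"
  shows "(\<Sum>k\<in>L. of_rat (e k) * b powi k) = 0"
proof -
  define N where "N = (\<Sum>k\<in>L. nat \<bar>k\<bar>)"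
  have N: "nat \<bar>k\<bar> \<le> N" if "k \<in> L" for k
    unfolding N_def using that L by (intro member_le_sum) auto
  define q where "q = (\<Sum>k\<in>L. monom (e k) (nat (k + int N)))"
  have ev: "poly (map_poly of_rat q) x = x^N * (\<Sum>k\<in>L. of_rat (e k) * x powi k)" if "x \<noteq> 0" for x :: real
  proof -
    have "poly (map_poly of_rat q) x = (\<Sum>k\<in>L. of_rat (e k) * x ^ (nat (k + int N)))"
      unfolding q_def using L by (simp add: mp_sum map_poly_monom poly_sum poly_monom)
    also have "\<dots> = (\<Sum>k\<in>L. x^N * (of_rat (e k) * x powi k))"
    proof (rule sum.cong)
      fix k assume "k \<in> L"
      then have "k + int N \<ge> 0" using N[of k] by linarith
      then have "x ^ (nat (k + int N)) = x powi (k + int N)" by (simp add: power_int_nonneg_exp)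
      also have "\<dots> = x powi k * x ^ N" using that by (simp add: power_int_add)
      finally show "of_rat (e k) * x ^ (nat (k + int N)) = x^N * (of_rat (e k) * x powi k)" by simp
    qed simp
    finally show ?thesis by (simp add: sum_distrib_left)
  qed
  have "p dvd q"
  proof (rule ccontr)
    assume "\<not> p dvd q"
    moreover have "prime_elem p" using irr by (rule field_poly_irreducible_imp_prime)
    ultimately have "coprime p q" using prime_elem_imp_coprime by blast
    then have "gcd p q = 1" by simp
    then have "fst (bezout_coefficients p q) * p + snd (bezout_coefficients p q) * q = 1"
      using bezout_coefficients_fst_snd by metis
    then have "poly (map_poly of_rat (fst (bezout_coefficients p q) * p + snd (bezout_coefficients p q) * q)) a = 1"
      by simp
    then show False using r1 ev[OF a0] s by (simp add: mp_add mp_mult)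
  qed
  then obtain r where "q = p * r" by blast
  then have "poly (map_poly of_rat q) b = 0" using r2 by (simp add: mp_mult)
  then show ?thesis using ev[OF b0] b0 by simp
qed



definition vv :: "real \<Rightarrow> int set \<Rightarrow> (int \<Rightarrow> nat) \<Rightarrow> real" where
  "vv x K c = (\<Sum>k\<in>K. real (c k) * x powi k)"

definition SS :: "real \<Rightarrow> real \<Rightarrow> (real \<times> real) set" where
  "SS a b = {(vv a K c, vv b K c) | K c. finite K}"

lemma powi_ge1:
  fixes a b :: real
  assumes "0 < a" "a < 1" "1 < b"
  shows "1 \<le> a powi k + b powi k"
proof (cases "k \<ge> 0")
  case True
  then have "1 \<le> b powi k" using assms by simp
  moreover have "0 < a powi k" using assms by simp
  ultimately show ?thesis by simp
next
  case False
  then have "a powi k = inverse (a ^ nat (-k))" by (simp add: power_int_def power_inverse)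
  moreover have "a ^ nat (-k) \<le> 1" "0 < a ^ nat (-k)" using assms by (auto intro: power_le_one)
  ultimately have "1 \<le> a powi k" by (simp add: one_le_inverse)
  moreover have "0 < b powi k" using assms by simp
  ultimately show ?thesis by simp
qed

lemma ext_sum:
  assumes "finite L" "K \<subseteq> L"
  shows "(\<Sum>k\<in>L. real (if k\<in>K then c k else 0) * g k) = (\<Sum>k\<in>K. real (c k) * g k)"
  using assms by (intro sum.mono_neutral_cong_right) auto

lemma SS_add:
  assumes "(x1,y1) \<in> SS a b" "(x2,y2) \<in> SS a b"
  shows "(x1+x2, y1+y2) \<in> SS a b"
proof -
  obtain K1 c1 where 1: "finite K1" "x1 = vv a K1 c1" "y1 = vv b K1 c1"
    using assms(1) unfolding SS_def by auto
  obtain K2 c2 where 2: "finite K2" "x2 = vv a K2 c2" "y2 = vv b K2 c2"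
    using assms(2) unfolding SS_def by auto
  define L where "L = K1 \<union> K2"
  define c where "c k = (if k\<in>K1 then c1 k else 0) + (if k\<in>K2 then c2 k else 0)" for k
  have fL: "finite L" using 1 2 L_def by auto
  have "vv z L c = vv z K1 c1 + vv z K2 c2" for z
  proof -
    have "vv z L c = (\<Sum>k\<in>L. real (if k\<in>K1 then c1 k else 0) * z powi k)
        + (\<Sum>k\<in>L. real (if k\<in>K2 then c2 k else 0) * z powi k)"
      unfolding vv_def c_def by (simp add: distrib_right sum.distrib)
    also have "\<dots> = vv z K1 c1 + vv z K2 c2"
      unfolding vv_def using fL L_def by (simp add: ext_sum)
    finally show ?thesis .
  qed
  then have "x1 + x2 = vv a L c" "y1 + y2 = vv b L c" using 1 2 by auto
  then show ?thesis unfolding SS_def using fL by blast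
qed

lemma SS_nn:
  assumes "(x,y) \<in> SS a b" "0 < a" "0 < b"
  shows "0 \<le> x \<and> 0 \<le> y"
proof -
  obtain K c where K: "x = vv a K c" "y = vv b K c"
    using assms(1) unfolding SS_def by auto
  have "0 \<le> vv z K c" if "0 < z" for z :: real
    unfolding vv_def using that by (intro sum_nonneg) simp
  then show ?thesis using K assms by simp
qed

lemma SS_ge1:
  assumes "(x,y) \<in> SS a b" "0 < a" "a < 1" "1 < b" "x \<noteq> 0"
  shows "1 \<le> x + y"
proof -
  obtain K c where K: "finite K" "x = vv a K c" "y = vv b K c"
    using assms(1) unfolding SS_def by auto
  obtain k0 where k0: "k0 \<in> K" "c k0 \<noteq> 0"
  proof -
    have "\<not> (\<forall>k\<in>K. c k = 0)"
    proof
      assume "\<forall>k\<in>K. c k = 0"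
      then have "x = 0" using K unfolding vv_def by simp
      then show False using assms(5) by simp
    qed
    then show ?thesis using that by blast
  qed
  have "x + y = (\<Sum>k\<in>K. real (c k) * (a powi k + b powi k))"
    using K unfolding vv_def by (simp add: distrib_left sum.distrib)
  also have "\<dots> \<ge> real (c k0) * (a powi k0 + b powi k0)"
  proof (rule member_le_sum)
    show "k0 \<in> K" "finite K" using K k0 by auto
    fix k assume "k \<in> K - {k0}"
    have "0 \<le> a powi k + b powi k" using assms by (intro add_nonneg_nonneg) simp_all
    then show "0 \<le> real (c k) * (a powi k + b powi k)" by simp
  qed
  finally have "real (c k0) * (a powi k0 + b powi k0) \<le> x + y" .
  moreover have "1 \<le> a powi k0 + b powi k0" using powi_ge1 assms by blast
  moreover have "1 \<le> real (c k0)" using k0 by simp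
  ultimately have "1 * 1 \<le> real (c k0) * (a powi k0 + b powi k0)"
    by (intro mult_mono) auto
  then show ?thesis using \<open>real (c k0) * (a powi k0 + b powi k0) \<le> x + y\<close> by linarith
qed

lemma SS_uniq:
  fixes p :: "rat poly"
  assumes irr: "irreducible p" and r1: "poly (map_poly of_rat p) a = 0"
    and r2: "poly (map_poly of_rat p) b = 0" and a0: "a \<noteq> 0" and b0: "b \<noteq> 0"
    and "(x,y1) \<in> SS a b" "(x,y2) \<in> SS a b"
  shows "y1 = y2"
proof -
  obtain K1 c1 where 1: "finite K1" "x = vv a K1 c1" "y1 = vv b K1 c1"
    using assms(6) unfolding SS_def by auto
  obtain K2 c2 where 2: "finite K2" "x = vv a K2 c2" "y2 = vv b K2 c2"
    using assms(7) unfolding SS_def by auto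
  define L where "L = K1 \<union> K2"
  have fL: "finite L" using 1 2 L_def by auto
  define e where "e k = (of_nat (if k\<in>K1 then c1 k else 0) - of_nat (if k\<in>K2 then c2 k else 0) :: rat)" for k
  have key: "(\<Sum>k\<in>L. of_rat (e k) * z powi k) = vv z K1 c1 - vv z K2 c2" for z
  proof -
    have "(\<Sum>k\<in>L. of_rat (e k) * z powi k) = (\<Sum>k\<in>L. real (if k\<in>K1 then c1 k else 0) * z powi k)
        - (\<Sum>k\<in>L. real (if k\<in>K2 then c2 k else 0) * z powi k)"
      unfolding e_def by (simp add: of_rat_diff left_diff_distrib sum_subtractf del: of_nat_0)
    also have "\<dots> = vv z K1 c1 - vv z K2 c2"
      unfolding vv_def using fL L_def by (simp add: ext_sum)
    finally show ?thesis .
  qed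
  have "(\<Sum>k\<in>L. of_rat (e k) * a powi k) = 0" using key 1 2 by simp
  then have "(\<Sum>k\<in>L. of_rat (e k) * b powi k) = 0"
    using conj_zero[OF irr r1 r2 a0 b0 fL] by blast
  then show ?thesis using key 1 2 by simp
qed


lemma SS_fin:
  fixes a b X Y :: real
  assumes "0 < a" "a < 1" "1 < b"
  shows "finite {x. \<exists>y. (x,y) \<in> SS a b \<and> x \<le> X \<and> y \<le> Y}"
proof -
  have a1: "1 < 1/a" using assms by simp
  obtain n1 where n1: "X < (1/a)^n1" using real_arch_pow[OF a1] by blast
  obtain n2 where n2: "Y < b^n2" using real_arch_pow[OF assms(3)] by blast
  define B where "B = int (max n1 n2)"
  define N where "N = nat \<lfloor>X + Y\<rfloor>"
  define I where "I = {-B..B}"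
  have sub: "{x. \<exists>y. (x,y) \<in> SS a b \<and> x \<le> X \<and> y \<le> Y}
      \<subseteq> (\<lambda>c. \<Sum>k\<in>I. real (c k) * a powi k) ` (PiE I (\<lambda>_. {0..N}))"
  proof
    fix x assume "x \<in> {x. \<exists>y. (x,y) \<in> SS a b \<and> x \<le> X \<and> y \<le> Y}"
    then obtain y K c where K: "finite K" "x = vv a K c" "y = vv b K c" "x \<le> X" "y \<le> Y"
      unfolding SS_def by auto
    have bnd: "k \<in> I \<and> c k \<le> N" if "k \<in> K" "c k \<noteq> 0" for k
    proof -
      have t1: "real (c k) * a powi k \<le> x" unfolding K(2) vv_def
        using K(1) that assms by (intro member_le_sum) auto
      have t2: "real (c k) * b powi k \<le> y" unfolding K(3) vv_def
        using K(1) that assms by (intro member_le_sum) auto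
      have ck: "1 \<le> real (c k)" using that by simp
      have "a powi k \<le> real (c k) * a powi k" using mult_right_mono[OF ck, of "a powi k"] assms by simp
      then have pa: "a powi k \<le> X" using t1 K(4) by linarith
      have "b powi k \<le> real (c k) * b powi k" using mult_right_mono[OF ck, of "b powi k"] assms by simp
      then have pb: "b powi k \<le> Y" using t2 K(5) by linarith
      have "k \<le> B"
      proof (rule ccontr)
        assume "\<not> k \<le> B"
        then have k: "k \<ge> 0" "nat k \<ge> n2" using B_def by auto
        then have "b powi k = b ^ nat k" by (simp add: power_int_nonneg_exp)
        also have "\<dots> \<ge> b ^ n2" using power_increasing[OF k(2), of b] assms by linarith
        finally show False using n2 pb by linarith
      qed
      moreover have "-B \<le> k"
      proof (rule ccontr)
        assume "\<not> -B \<le> k"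
        then have k: "k < 0" "nat (-k) \<ge> n1" using B_def by auto
        then have "a powi k = (1/a) ^ nat (-k)" by (simp add: power_int_def inverse_eq_divide power_divide)
        also have "\<dots> \<ge> (1/a) ^ n1" using power_increasing[OF k(2), of "1/a"] a1 by linarith
        finally show False using n1 pa by linarith
      qed
      moreover have "real (c k) \<le> X + Y"
      proof -
        have "1 \<le> a powi k + b powi k" using powi_ge1 assms by blast
        then have "real (c k) * 1 \<le> real (c k) * (a powi k + b powi k)"
          by (intro mult_left_mono) auto
        then show ?thesis using t1 t2 K(4,5) by (simp add: distrib_left)
      qed
      then have "int (c k) \<le> \<lfloor>X + Y\<rfloor>" by (simp add: le_floor_iff)
      then have "c k \<le> N" unfolding N_def by linarith
      ultimately show ?thesis unfolding I_def by auto
    qed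
    define c' where "c' = restrict (\<lambda>k. if k\<in>K then c k else 0) I"
    have "c' \<in> PiE I (\<lambda>_. {0..N})" unfolding c'_def
      by (auto simp: PiE_iff) (metis bnd le0)
    moreover have "x = (\<Sum>k\<in>I. real (c' k) * a powi k)"
    proof -
      have fKI: "finite (K \<union> I)" using K(1) unfolding I_def by auto
      have "x = (\<Sum>k\<in>K \<union> I. real (if k\<in>K then c k else 0) * a powi k)"
        using ext_sum[OF fKI, of K c "\<lambda>k. a powi k"] K(2) unfolding vv_def by auto
      also have "\<dots> = (\<Sum>k\<in>I. real (if k\<in>K then c k else 0) * a powi k)"
        using fKI bnd by (intro sum.mono_neutral_right) auto
      also have "\<dots> = (\<Sum>k\<in>I. real (c' k) * a powi k)"
        unfolding c'_def by (intro sum.cong) auto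
      finally show ?thesis .
    qed
    ultimately show "x \<in> (\<lambda>c. \<Sum>k\<in>I. real (c k) * a powi k) ` (PiE I (\<lambda>_. {0..N}))" by blast
  qed
  have "finite (PiE I (\<lambda>_. {0..N}))" unfolding I_def by (intro finite_PiE) auto
  then show ?thesis using sub finite_subset by blast
qed

lemma lm_eq: "laurent_monoid a = fst ` SS a b"
  unfolding laurent_monoid_def SS_def vv_def by (auto simp: image_iff; blast)

theorem theorem4p7:
  fixes p :: "rat poly" and \<alpha>1 \<alpha>2 :: real
  assumes "degree p = 2" and "irreducible p"
    and "poly (map_poly of_rat p) \<alpha>1 = 0" and "poly (map_poly of_rat p) \<alpha>2 = 0"
    and "0 < \<alpha>1" and "\<alpha>1 < 1" and "1 < \<alpha>2"
  shows "FFM (laurent_monoid \<alpha>1) \<and> ACCP (laurent_monoid \<alpha>1)"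
proof -
  define S where "S = SS \<alpha>1 \<alpha>2"
  define M where "M = laurent_monoid \<alpha>1"
  define \<sigma> where "\<sigma> x = (THE y. (x,y) \<in> S)" for x
  have uq: "(x,y1) \<in> S \<Longrightarrow> (x,y2) \<in> S \<Longrightarrow> y1 = y2" for x y1 y2
    unfolding S_def using SS_uniq[OF assms(2,3,4)] assms(5,7) by force
  have MS: "M = fst ` S" unfolding M_def S_def by (rule lm_eq)
  have inS: "(x, \<sigma> x) \<in> S" if "x \<in> M" for x
  proof -
    have "x \<in> fst ` S" using that MS by simp
    then obtain z where "z \<in> S" "x = fst z" by blast
    then obtain y where y: "(x,y) \<in> S" by (cases z) auto
    then have "\<sigma> x = y" unfolding \<sigma>_def using uq by blast
    then show ?thesis using y by simp
  qed
  have sig: "(x,y) \<in> S \<Longrightarrow> \<sigma> x = y" for x y unfolding \<sigma>_def using uq by blast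
  have "FFM M \<and> ACCP M"
  proof (rule abstract_FFM_ACCP)
    fix x y assume "x \<in> M" "y \<in> M"
    then have "(x+y, \<sigma> x + \<sigma> y) \<in> S" using inS SS_add unfolding S_def by blast
    then show "x + y \<in> M \<and> \<sigma> (x + y) = \<sigma> x + \<sigma> y" using MS sig by force
  next
    fix x assume "x \<in> M"
    then show "0 \<le> x \<and> 0 \<le> \<sigma> x" using inS SS_nn assms(5,7) unfolding S_def by fastforce
  next
    fix x assume "x \<in> M" "x \<noteq> 0"
    then show "1 \<le> x + \<sigma> x" using inS SS_ge1 assms(5,6,7) unfolding S_def by blast
  next
    have "(0,0) \<in> S" unfolding S_def SS_def vv_def by force
    then show "0 \<in> M" using MS by force
  next
    fix X Y
    have "{a \<in> M. a \<le> X \<and> \<sigma> a \<le> Y} \<subseteq> {x. \<exists>y. (x,y) \<in> SS \<alpha>1 \<alpha>2 \<and> x \<le> X \<and> y \<le> Y}"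
      using inS unfolding S_def by blast
    then show "finite {a \<in> M. a \<le> X \<and> \<sigma> a \<le> Y}"
      using SS_fin[OF assms(5,6,7)] finite_subset by blast
  qed
  then show ?thesis unfolding M_def .
qed

end
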